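(* (Soundness.) For every finite multiset $\Gamma$ of formulae of intuitionistic linear logic and every formula $\varphi$: if $\Gamma \vdash \varphi$ is derivable in the natural deduction system $\mathrm{N_{ILL}}$, then the sequent $(\Gamma:\varphi)$ is valid, i.e. $\Gamma \Vdash^{\varnothing}_{\mathcal{B}} \varphi$ for every base $\mathcal{B}$.
   Context: Fix a set $\mathbb{A}$ of propositional atoms. ILL formulae: $\phi ::= p\in\mathbb{A} \mid \top \mid 0 \mid 1 \mid \phi\multimap\phi \mid \phi\otimes\phi \mid \phi\,\&\,\phi \mid \phi\oplus\phi \mid\ !\phi$. All multisets are finite; "$\Gamma,\Delta$" denotes multiset union. Natural deduction $\mathrm{N_{ILL}}$: $\Gamma\vdash\varphi$ is defined inductively by: (Ax) $\varphi\vdash\varphi$; ($\multimap$I) from $\Gamma,\phi\vdash\psi$ infer $\Gamma\vdash\phi\multimap\psi$; ($\multimap$E) from $\Gamma\vdash\phi\multimap\psi$ and $\Delta\vdash\phi$ infer $\Gamma,\Delta\vdash\psi$; ($\otimes$I) from $\Gamma\vdash\phi$, $\Delta\vdash\psi$ infer $\Gamma,\Delta\vdash\phi\otimes\psi$; ($\otimes$E) from $\Gamma\vdash\phi\otimes\psi$ and $\Delta,\phi,\psi\vdash\chi$ infer $\Gamma,\Delta\vdash\chi$; ($1$I) $\vdash 1$; ($1$E) from $\Gamma\vdash 1$, $\Delta\vdash\phi$ infer $\Gamma,\Delta\vdash\phi$; ($\&$I) from $\Gamma\vdash\phi$, $\Gamma\vdash\psi$ infer $\Gamma\vdash\phi\&\psi$;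 ($\&$E) from $\Gamma\vdash\phi\&\psi$ infer $\Gamma\vdash\phi$ and infer $\Gamma\vdash\psi$; ($\oplus$I) from $\Gamma\vdash\phi$ (or $\Gamma\vdash\psi$) infer $\Gamma\vdash\phi\oplus\psi$; ($\oplus$E) from $\Gamma\vdash\phi\oplus\psi$, $\Delta,\phi\vdash\chi$, $\Delta,\psi\vdash\chi$ infer $\Gamma,\Delta\vdash\chi$; ($\top$I) for $n\ge0$, from $\Gamma_i\vdash\phi_i$ ($i=1..n$) infer $\Gamma_1,\dots,\Gamma_n\vdash\top$; ($0$E) for $n\ge 0$, from $\Gamma_i\vdash\phi_i$ ($i=1..n$) and $\Delta\vdash 0$ infer $\Gamma_1,\dots,\Gamma_n,\Delta\vdash\chi$; (Prom$_n$) for $n\ge0$, from $\Gamma_i\vdash\,!\psi_i$ ($i=1..n$) and $!\psi_1,\dots,!\psi_n\vdash\phi$ infer $\Gamma_1,\dots,\Gamma_n\vdash\,!\phi$; (Der) from $\Gamma\vdash\,!\phi$, $\Delta,\phi\vdash\psi$ infer $\Gamma,\Delta\vdash\psi$; (Wk) from $\Gamma\vdash\,!\phi$, $\Delta\vdash\psi$ infer $\Gamma,\Delta\vdash\psi$; (Ctr) from $\Gamma\vdash\,!\phi$, $\Delta,!\phi,!\phi\vdash\psi$ infer $\Gamma,\Delta\vdash\psi$. Atomic rules and bases: an atomic sequent is $P\Rightarrow p$ with $P$ a multiset of atoms, $p$ an atom. An atomic box is a multiset of atomic sequents. An atomic rule is a triple $\langle\mathbf{A},\mathbf{S},p\rangle$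 with $\mathbf{A}$ a multiset of atomic boxes, $\mathbf{S}$ an atomic box, $p$ an atom. A base is a set of atomic rules. An atom $p$ is persistent in $\mathcal{B}$ if some $\langle\varnothing,\mathbf{S},p\rangle\in\mathcal{B}$ has $\mathbf{S}\neq\varnothing$. Derivability $\vdash_{\mathcal{B}}$ between atomic multisets and atoms is defined inductively: (Ref) $p\vdash_{\mathcal{B}}p$; (App) if $\langle\mathbf{A},\mathbf{S},p\rangle\in\mathcal{B}$ with $\mathbf{A}=\{\mathbf{T}_1,\dots,\mathbf{T}_m\}$, and there are atomic multisets $C_1,\dots,C_n$ ($n\ge m$) and a multiset $D=\{d_{m+1},\dots,d_n\}$ of atoms persistent in $\mathcal{B}$ such that $C_i,Q\vdash_{\mathcal{B}}q$ for every $i\le m$ and every $Q\Rightarrow q\in\mathbf{T}_i$, $C_j\vdash_{\mathcal{B}}d_j$ for every $m<j\le n$, and $D,U\vdash_{\mathcal{B}}v$ for every $U\Rightarrow v\in\mathbf{S}$, then $C_1,\dots,C_n\vdash_{\mathcal{B}}p$. Support $\Vdash^L_{\mathcal{B}}$ (base $\mathcal{B}$, atomic multiset $L$), defined by induction on formulae: $\Vdash^L_{\mathcal{B}}p$ iff $L\vdash_{\mathcal{B}}p$; $\Vdash^L_{\mathcal{B}}\varphi\multimap\psi$ iff $\varphi\Vdash^L_{\mathcal{B}}\psi$; $\Vdash^L_{\mathcal{B}}\varphi\otimes\psi$ iff for all $\mathcal{C}\supseteq\mathcal{B}$, atomic multisets $K$, atoms $p$: if $\varphi,\psi\Vdash^K_{\mathcal{C}}p$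 then $\Vdash^{L,K}_{\mathcal{C}}p$; $\Vdash^L_{\mathcal{B}}1$ iff for all $\mathcal{C}\supseteq\mathcal{B}$, $K$, $p$: if $\Vdash^K_{\mathcal{C}}p$ then $\Vdash^{L,K}_{\mathcal{C}}p$; $\Vdash^L_{\mathcal{B}}\varphi\&\psi$ iff $\Vdash^L_{\mathcal{B}}\varphi$ and $\Vdash^L_{\mathcal{B}}\psi$; $\Vdash^L_{\mathcal{B}}\varphi\oplus\psi$ iff for all $\mathcal{C}\supseteq\mathcal{B}$, $K$, $p$: if $\varphi\Vdash^K_{\mathcal{C}}p$ and $\psi\Vdash^K_{\mathcal{C}}p$ then $\Vdash^{L,K}_{\mathcal{C}}p$; $\Vdash^L_{\mathcal{B}}0$ iff $\Vdash^{L,K}_{\mathcal{B}}p$ for all atoms $p$ and atomic multisets $K$; $\Vdash^L_{\mathcal{B}}\top$ always; $\Vdash^L_{\mathcal{B}}!\varphi$ iff for all $\mathcal{C}\supseteq\mathcal{B}$, $K$, $p$: if (for all $\mathcal{D}\supseteq\mathcal{C}$, $\Vdash^{\varnothing}_{\mathcal{D}}\varphi$ implies $\Vdash^K_{\mathcal{D}}p$) then $\Vdash^{L,K}_{\mathcal{C}}p$. For nonempty multisets: $\Vdash^L_{\mathcal{B}}\Gamma,\Delta$ iff $L=K,M$ for some $K,M$ with $\Vdash^K_{\mathcal{B}}\Gamma$ and $\Vdash^M_{\mathcal{B}}\Delta$. For a nonempty antecedent written as $!\Delta,\Theta$, where $!\Delta$ collects the formulae whose top-level connective is $!$ (with $\Delta$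 the formulae under those $!$) and $\Theta$ contains none: $!\Delta,\Theta\Vdash^L_{\mathcal{B}}\varphi$ iff for all $\mathcal{C}\supseteq\mathcal{B}$ and atomic $K$, if $\Vdash^{\varnothing}_{\mathcal{C}}\delta$ for every $\delta\in\Delta$ and $\Vdash^K_{\mathcal{C}}\Theta$ then $\Vdash^{L,K}_{\mathcal{C}}\varphi$ (when $\Theta$ is empty, $K$ is empty). An empty antecedent: $\varnothing\Vdash^L_{\mathcal{B}}\varphi$ means $\Vdash^L_{\mathcal{B}}\varphi$. A sequent $(\Gamma:\varphi)$ is valid, written $\Gamma\Vdash\varphi$, iff $\Gamma\Vdash^{\varnothing}_{\mathcal{B}}\varphi$ for all bases $\mathcal{B}$. *)

theory Defs
  imports "HOL-Library.Multiset"
begin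

datatype 'a form =
    Atom 'a
  | Top
  | Zero
  | One
  | Lolli "'a form" "'a form"
  | Tensor "'a form" "'a form"
  | With "'a form" "'a form"
  | Plus "'a form" "'a form"
  | Bang "'a form"

inductive nd :: "'a form multiset \<Rightarrow> 'a form \<Rightarrow> bool" where
  Ax: "nd {#\<phi>#} \<phi>"
| LolliI: "nd (\<Gamma> + {#\<phi>#}) \<psi> \<Longrightarrow> nd \<Gamma> (Lolli \<phi> \<psi>)"
| LolliE: "nd \<Gamma> (Lolli \<phi> \<psi>) \<Longrightarrow> nd \<Delta> \<phi> \<Longrightarrow> nd (\<Gamma> + \<Delta>) \<psi>"
| TensorI: "nd \<Gamma> \<phi> \<Longrightarrow> nd \<Delta> \<psi> \<Longrightarrow> nd (\<Gamma> + \<Delta>) (Tensor \<phi> \<psi>)"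
| TensorE: "nd \<Gamma> (Tensor \<phi> \<psi>) \<Longrightarrow> nd (\<Delta> + {#\<phi>, \<psi>#}) \<chi> \<Longrightarrow> nd (\<Gamma> + \<Delta>) \<chi>"
| OneI: "nd {#} One"
| OneE: "nd \<Gamma> One \<Longrightarrow> nd \<Delta> \<phi> \<Longrightarrow> nd (\<Gamma> + \<Delta>) \<phi>"
| WithI: "nd \<Gamma> \<phi> \<Longrightarrow> nd \<Gamma> \<psi> \<Longrightarrow> nd \<Gamma> (With \<phi> \<psi>)"
| WithE1: "nd \<Gamma> (With \<phi> \<psi>) \<Longrightarrow> nd \<Gamma> \<phi>"
| WithE2: "nd \<Gamma> (With \<phi> \<psi>) \<Longrightarrow> nd \<Gamma> \<psi>"
| PlusI1: "nd \<Gamma> \<phi> \<Longrightarrow> nd \<Gamma> (Plus \<phi> \<psi>)"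
| PlusI2: "nd \<Gamma> \<psi> \<Longrightarrow> nd \<Gamma> (Plus \<phi> \<psi>)"
| PlusE: "nd \<Gamma> (Plus \<phi> \<psi>) \<Longrightarrow> nd (\<Delta> + {#\<phi>#}) \<chi> \<Longrightarrow> nd (\<Delta> + {#\<psi>#}) \<chi>
           \<Longrightarrow> nd (\<Gamma> + \<Delta>) \<chi>"
| TopI: "(\<And>i. i < length ps \<Longrightarrow> nd (fst (ps ! i)) (snd (ps ! i)))
           \<Longrightarrow> nd (sum_list (map fst ps)) Top"
| ZeroE: "(\<And>i. i < length ps \<Longrightarrow> nd (fst (ps ! i)) (snd (ps ! i)))
           \<Longrightarrow> nd \<Delta> Zero \<Longrightarrow> nd (sum_list (map fst ps) + \<Delta>) \<chi>"
| Prom: "(\<And>i. i < length ps \<Longrightarrow> nd (fst (ps ! i)) (Bang (snd (ps ! i))))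
           \<Longrightarrow> nd (mset (map (\<lambda>x. Bang (snd x)) ps)) \<phi>
           \<Longrightarrow> nd (sum_list (map fst ps)) (Bang \<phi>)"
| Der: "nd \<Gamma> (Bang \<phi>) \<Longrightarrow> nd (\<Delta> + {#\<phi>#}) \<psi> \<Longrightarrow> nd (\<Gamma> + \<Delta>) \<psi>"
| Wk: "nd \<Gamma> (Bang \<phi>) \<Longrightarrow> nd \<Delta> \<psi> \<Longrightarrow> nd (\<Gamma> + \<Delta>) \<psi>"
| Ctr: "nd \<Gamma> (Bang \<phi>) \<Longrightarrow> nd (\<Delta> + {#Bang \<phi>, Bang \<phi>#}) \<psi> \<Longrightarrow> nd (\<Gamma> + \<Delta>) \<psi>"

type_synonym 'a aseq = "'a multiset \<times> 'a"            (* P => p *)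
type_synonym 'a abox = "'a aseq multiset"
type_synonym 'a arule = "'a abox multiset \<times> 'a abox \<times> 'a"
type_synonym 'a base = "'a arule set"

definition persistent :: "'a base \<Rightarrow> 'a \<Rightarrow> bool" where
  "persistent B p \<longleftrightarrow> (\<exists>S. ({#}, S, p) \<in> B \<and> S \<noteq> {#})"

inductive deriv :: "'a base \<Rightarrow> 'a multiset \<Rightarrow> 'a \<Rightarrow> bool" for B where
  Ref: "deriv B {#p#} p"
| App: "(A, S, p) \<in> B \<Longrightarrow> mset Ts = A \<Longrightarrow> length Cs = length Ts + length ds
        \<Longrightarrow> (\<And>d. d \<in> set ds \<Longrightarrow> persistent B d)
        \<Longrightarrow> (\<And>i Q q. i < length Ts \<Longrightarrow> (Q, q) \<in># Ts ! i \<Longrightarrow> deriv B (Cs ! i + Q) q)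
        \<Longrightarrow> (\<And>j. j < length ds \<Longrightarrow> deriv B (Cs ! (length Ts + j)) (ds ! j))
        \<Longrightarrow> (\<And>U v. (U, v) \<in># S \<Longrightarrow> deriv B (mset ds + U) v)
        \<Longrightarrow> deriv B (sum_list Cs) p"

definition is_bang :: "'a form \<Rightarrow> bool" where
  "is_bang \<phi> \<longleftrightarrow> (\<exists>\<delta>. \<phi> = Bang \<delta>)"

definition msupp :: "('a base \<Rightarrow> 'a multiset \<Rightarrow> 'a form \<Rightarrow> bool) \<Rightarrow> 'a base
     \<Rightarrow> 'a multiset \<Rightarrow> 'a form multiset \<Rightarrow> bool" where
  "msupp S B L \<Theta> \<longleftrightarrow> (\<exists>xs Ks. mset xs = \<Theta> \<and> length Ks = length xs \<and> L = sum_list Ks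
      \<and> (\<forall>i < length xs. S B (Ks ! i) (xs ! i)))"

definition hyps :: "('a base \<Rightarrow> 'a multiset \<Rightarrow> 'a form \<Rightarrow> bool) \<Rightarrow> 'a base
     \<Rightarrow> 'a multiset \<Rightarrow> 'a form multiset \<Rightarrow> bool" where
  "hyps S C K \<Gamma> \<longleftrightarrow> (\<forall>\<delta>. Bang \<delta> \<in># \<Gamma> \<longrightarrow> S C {#} \<delta>)
      \<and> msupp S C K (filter_mset (\<lambda>x. \<not> is_bang x) \<Gamma>)"

definition ante :: "('a base \<Rightarrow> 'a multiset \<Rightarrow> 'a form \<Rightarrow> bool) \<Rightarrow> 'a base
     \<Rightarrow> 'a multiset \<Rightarrow> 'a form multiset \<Rightarrow> ('a base \<Rightarrow> 'a multiset \<Rightarrow> bool) \<Rightarrow> bool" where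
  "ante S B L \<Gamma> Q \<longleftrightarrow> (if \<Gamma> = {#} then Q B L
      else (\<forall>C K. B \<subseteq> C \<longrightarrow> hyps S C K \<Gamma> \<longrightarrow> Q C (L + K)))"

lemma msupp_cong [fundef_cong]:
  "B = B' \<Longrightarrow> L = L' \<Longrightarrow> \<Theta> = \<Theta>' \<Longrightarrow> (\<And>M x. x \<in># \<Theta>' \<Longrightarrow> S B' M x = S' B' M x)
   \<Longrightarrow> msupp S B L \<Theta> = msupp S' B' L' \<Theta>'"
  unfolding msupp_def
  by (smt (verit, best) nth_mem set_mset_mset)

lemma hyps_cong [fundef_cong]:
  "C = C' \<Longrightarrow> K = K' \<Longrightarrow> \<Gamma> = \<Gamma>'
   \<Longrightarrow> (\<And>M x. x \<in># \<Gamma>' \<Longrightarrow> S C' M x = S' C' M x)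
   \<Longrightarrow> (\<And>\<delta>. Bang \<delta> \<in># \<Gamma>' \<Longrightarrow> S C' {#} \<delta> = S' C' {#} \<delta>)
   \<Longrightarrow> hyps S C K \<Gamma> = hyps S' C' K' \<Gamma>'"
  unfolding hyps_def
  apply (rule conj_cong)
   apply blast
  apply (rule msupp_cong)
     apply auto
  done

lemma ante_cong [fundef_cong]:
  "B = B' \<Longrightarrow> L = L' \<Longrightarrow> \<Gamma> = \<Gamma>'
   \<Longrightarrow> (\<And>C M x. x \<in># \<Gamma>' \<Longrightarrow> S C M x = S' C M x)
   \<Longrightarrow> (\<And>C \<delta>. Bang \<delta> \<in># \<Gamma>' \<Longrightarrow> S C {#} \<delta> = S' C {#} \<delta>)
   \<Longrightarrow> (\<And>C M. Q C M = Q' C M)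
   \<Longrightarrow> ante S B L \<Gamma> Q = ante S' B' L' \<Gamma>' Q'"
  unfolding ante_def
  by (simp cong: hyps_cong)

fun supp :: "'a base \<Rightarrow> 'a multiset \<Rightarrow> 'a form \<Rightarrow> bool" where
  "supp B L (Atom p) \<longleftrightarrow> deriv B L p"
| "supp B L (Lolli \<phi> \<psi>) \<longleftrightarrow> ante supp B L {#\<phi>#} (\<lambda>C M. supp C M \<psi>)"
| "supp B L (Tensor \<phi> \<psi>) \<longleftrightarrow> (\<forall>C K p. B \<subseteq> C \<longrightarrow>
      ante supp C K {#\<phi>, \<psi>#} (\<lambda>D M. deriv D M p) \<longrightarrow> deriv C (L + K) p)"
| "supp B L One \<longleftrightarrow> (\<forall>C K p. B \<subseteq> C \<longrightarrow> deriv C K p \<longrightarrow> deriv C (L + K) p)"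
| "supp B L (With \<phi> \<psi>) \<longleftrightarrow> supp B L \<phi> \<and> supp B L \<psi>"
| "supp B L (Plus \<phi> \<psi>) \<longleftrightarrow> (\<forall>C K p. B \<subseteq> C \<longrightarrow>
      ante supp C K {#\<phi>#} (\<lambda>D M. deriv D M p) \<longrightarrow>
      ante supp C K {#\<psi>#} (\<lambda>D M. deriv D M p) \<longrightarrow> deriv C (L + K) p)"
| "supp B L Zero \<longleftrightarrow> (\<forall>p K. deriv B (L + K) p)"
| "supp B L Top \<longleftrightarrow> True"
| "supp B L (Bang \<phi>) \<longleftrightarrow> (\<forall>C K p. B \<subseteq> C \<longrightarrow>
      (\<forall>D. C \<subseteq> D \<longrightarrow> supp D {#} \<phi> \<longrightarrow> deriv D K p) \<longrightarrow> deriv C (L + K) p)"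

definition ante_supp :: "'a base \<Rightarrow> 'a multiset \<Rightarrow> 'a form multiset \<Rightarrow> 'a form \<Rightarrow> bool" where
  "ante_supp B L \<Gamma> \<phi> \<longleftrightarrow> ante supp B L \<Gamma> (\<lambda>C M. supp C M \<phi>)"

definition valid :: "'a form multiset \<Rightarrow> 'a form \<Rightarrow> bool" where
  "valid \<Gamma> \<phi> \<longleftrightarrow> (\<forall>B. ante_supp B {#} \<Gamma> \<phi>)"

end

theory Submission
  imports Defs
begin

lemma deriv_mono: "deriv B L p \<Longrightarrow> B \<subseteq> C \<Longrightarrow> deriv C L p"
proof (induction rule: deriv.induct)
  case (Ref p) show ?case by (rule deriv.Ref)
next
  case (App A S p Ts Cs ds)
  show ?case
    apply (rule deriv.App[of A S p C Ts Cs ds])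
    using App by (auto simp: persistent_def) (metis subsetD)
qed

lemma supp_mono: "supp B L \<phi> \<Longrightarrow> B \<subseteq> C \<Longrightarrow> supp C L \<phi>"
proof (induction \<phi> arbitrary: B L C)
  case (Atom x) then show ?case by (auto intro: deriv_mono)
next
  case Zero then show ?case by (auto intro: deriv_mono)
next
  case (With a b) then show ?case by auto
qed (auto simp: ante_def)

lemma msupp_alt: "msupp S B L \<Theta> \<longleftrightarrow> (\<exists>xs Ks. mset xs = \<Theta> \<and> list_all2 (S B) Ks xs \<and> L = sum_list Ks)"
  unfolding msupp_def list_all2_conv_all_nth by metis

lemma msupp_empty[simp]: "msupp S B L {#} \<longleftrightarrow> L = {#}"
  unfolding msupp_alt by auto

lemma msupp_add: "msupp S B L (add_mset x \<Theta>) \<longleftrightarrow> (\<exists>L1 L2. L = L1 + L2 \<and> S B L1 x \<and> msupp S B L2 \<Theta>)"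
proof
  assume "msupp S B L (add_mset x \<Theta>)"
  then obtain xs Ks where xs: "mset xs = add_mset x \<Theta>" "list_all2 (S B) Ks xs" "L = sum_list Ks"
    unfolding msupp_alt by blast
  have "x \<in> set xs" using xs(1) by (metis union_single_eq_member set_mset_mset)
  then obtain as bs where ab: "xs = as @ x # bs" by (meson split_list)
  with xs(2) obtain us vs where uv: "Ks = us @ vs" "list_all2 (S B) us as" "list_all2 (S B) vs (x # bs)"
    by (auto simp: list_all2_append2)
  then obtain k ws where kw: "vs = k # ws" "S B k x" "list_all2 (S B) ws bs"
    by (auto simp: list_all2_Cons2)
  have "mset (as @ bs) = \<Theta>" using xs(1) ab by simp
  moreover have "list_all2 (S B) (us @ ws) (as @ bs)" using uv kw by (simp add: list_all2_appendI)
  ultimately have "msupp S B (sum_list (us @ ws)) \<Theta>" unfolding msupp_alt by blast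
  moreover have "L = k + sum_list (us @ ws)" using xs(3) uv kw by (simp add: ac_simps)
  ultimately show "\<exists>L1 L2. L = L1 + L2 \<and> S B L1 x \<and> msupp S B L2 \<Theta>" using kw by blast
next
  assume "\<exists>L1 L2. L = L1 + L2 \<and> S B L1 x \<and> msupp S B L2 \<Theta>"
  then obtain L1 L2 xs Ks where "L = L1 + L2" "S B L1 x" "mset xs = \<Theta>" "list_all2 (S B) Ks xs" "L2 = sum_list Ks"
    unfolding msupp_alt by blast
  then show "msupp S B L (add_mset x \<Theta>)" unfolding msupp_alt
    by (intro exI[of _ "x # xs"] exI[of _ "L1 # Ks"]) auto
qed

lemma msupp_plus: "msupp S B L (\<Gamma> + \<Delta>) \<longleftrightarrow> (\<exists>L1 L2. L = L1 + L2 \<and> msupp S B L1 \<Gamma> \<and> msupp S B L2 \<Delta>)"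
proof (induction \<Gamma> arbitrary: L)
  case empty then show ?case by simp
next
  case (add x \<Gamma>)
  show ?case
    apply (simp add: msupp_add add)
    by (metis (no_types, lifting) add.assoc)
qed

lemma msupp_mono: "msupp S B L \<Gamma> \<Longrightarrow> (\<And>K x. S B K x \<Longrightarrow> S C K x) \<Longrightarrow> msupp S C L \<Gamma>"
  unfolding msupp_alt by (metis list_all2_mono)

abbreviation H where "H \<equiv> hyps supp"

lemma H_empty[simp]: "H C K {#} \<longleftrightarrow> K = {#}"
  by (simp add: hyps_def)

lemma H_add: "H C K (add_mset x \<Gamma>) \<longleftrightarrow>
   (if is_bang x then supp C {#} (THE \<delta>. x = Bang \<delta>) \<and> H C K \<Gamma>
    else (\<exists>K1 K2. K = K1 + K2 \<and> supp C K1 x \<and> H C K2 \<Gamma>))"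
  by (auto simp: hyps_def msupp_add is_bang_def)

lemma H_add_bang[simp]: "H C K (add_mset (Bang d) \<Gamma>) \<longleftrightarrow> supp C {#} d \<and> H C K \<Gamma>"
  by (simp add: H_add is_bang_def)

lemma H_add_nb: "\<not> is_bang x \<Longrightarrow> H C K (add_mset x \<Gamma>) \<longleftrightarrow> (\<exists>K1 K2. K = K1 + K2 \<and> supp C K1 x \<and> H C K2 \<Gamma>)"
  by (simp add: H_add)

lemma H_plus: "H C K (\<Gamma> + \<Delta>) \<longleftrightarrow> (\<exists>K1 K2. K = K1 + K2 \<and> H C K1 \<Gamma> \<and> H C K2 \<Delta>)"
  by (auto simp: hyps_def msupp_plus)

lemma H_plusI: "H C K1 \<Gamma> \<Longrightarrow> H C K2 \<Delta> \<Longrightarrow> H C (K1 + K2) (\<Gamma> + \<Delta>)"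
  using H_plus by blast

lemma H_mono: "H C K \<Gamma> \<Longrightarrow> C \<subseteq> D \<Longrightarrow> H D K \<Gamma>"
  unfolding hyps_def using supp_mono msupp_mono by metis

lemma H_allbang: "\<forall>x\<in>#\<Gamma>. is_bang x \<Longrightarrow> H C K \<Gamma> \<Longrightarrow> K = {#}"
proof -
  assume a: "\<forall>x\<in>#\<Gamma>. is_bang x" "H C K \<Gamma>"
  have "filter_mset (\<lambda>x. \<not> is_bang x) \<Gamma> = {#}" using a(1) by (simp add: filter_mset_eq_conv)
  then have "msupp supp C K {#}" using a(2) unfolding hyps_def by metis
  then show ?thesis by simp
qed


lemma tensor_app: "supp D L (Tensor a b) \<Longrightarrow> ante supp D N {#a, b#} (\<lambda>D M. deriv D M p) \<Longrightarrow> deriv D (L + N) p"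
  by (subst (asm) supp.simps) blast

lemma plus_app: "supp D L (Plus a b) \<Longrightarrow> ante supp D N {#a#} (\<lambda>D M. deriv D M p) \<Longrightarrow> ante supp D N {#b#} (\<lambda>D M. deriv D M p) \<Longrightarrow> deriv D (L + N) p"
  by (subst (asm) supp.simps) blast

lemma bang_app: "supp D L (Bang a) \<Longrightarrow> (\<forall>D'. D \<subseteq> D' \<longrightarrow> supp D' {#} a \<longrightarrow> deriv D' N p) \<Longrightarrow> deriv D (L + N) p"
  by (subst (asm) supp.simps) blast

definition Cond where
  "Cond Gs C K Q \<longleftrightarrow> (\<forall>G\<in>Gs. \<forall>D M. C \<subseteq> D \<longrightarrow> H D M G \<longrightarrow> Q D (K + M))"

lemma elim:
  assumes major: "\<And>C K p. B \<subseteq> C \<Longrightarrow> Cond Gs C K (\<lambda>D M. deriv D M p) \<Longrightarrow> deriv C (L + K) p"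
  shows "B \<subseteq> C \<Longrightarrow> Cond Gs C K (\<lambda>D M. supp D M \<chi>) \<Longrightarrow> supp C (L + K) \<chi>"
proof (induction \<chi> arbitrary: C K)
  case (Atom x)
  then show ?case using major by simp
next
  case Top
  then show ?case by simp
next
  case Zero
  show ?case
  proof (simp, intro allI)
    fix p K'
    have "Cond Gs C (K + K') (\<lambda>D M. deriv D M p)"
      using Zero(2) unfolding Cond_def by (simp add: ac_simps)
    from major[OF Zero(1) this] show "deriv C (L + K + K') p" by (simp add: ac_simps)
  qed
next
  case One
  show ?case
  proof (simp, intro allI impI)
    fix E N p assume E: "C \<subseteq> E" and d: "deriv E N p"
    have cond: "Cond Gs E (K + N) (\<lambda>D M. deriv D M p)"
      unfolding Cond_def
    proof (intro ballI allI impI)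
      fix G D M assume G: "G \<in> Gs" "E \<subseteq> D" "H D M G"
      then have "supp D (K + M) One" using One(2) E unfolding Cond_def by blast
      moreover have "deriv D N p" using d G(2) by (rule deriv_mono)
      ultimately have "deriv D (K + M + N) p" by (metis supp.simps(4) order_refl)
      then show "deriv D (K + N + M) p" by (simp add: ac_simps)
    qed
    have BE: "B \<subseteq> E" using One(1) E by blast
    have "deriv E (L + (K + N)) p" by (rule major[OF BE cond])
    then show "deriv E (L + K + N) p" by (simp add: ac_simps)
  qed
next
  case (Lolli a b)
  show ?case
  proof (simp add: ante_def, intro allI impI)
    fix E N assume E: "C \<subseteq> E" and h: "H E N {#a#}"
    have cond: "Cond Gs E (K + N) (\<lambda>D M. supp D M b)"
      unfolding Cond_def
    proof (intro ballI allI impI)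
      fix G D M assume G: "G \<in> Gs" "E \<subseteq> D" "H D M G"
      then have "supp D (K + M) (Lolli a b)" using Lolli(4) E unfolding Cond_def by blast
      hence "\<forall>D' M'. D \<subseteq> D' \<longrightarrow> H D' M' {#a#} \<longrightarrow> supp D' (K + M + M') b" by (simp add: ante_def)
      moreover have "H D N {#a#}" using h G(2) H_mono by blast
      ultimately have "supp D (K + M + N) b" by blast
      then show "supp D (K + N + M) b" by (simp add: ac_simps)
    qed
    have BE: "B \<subseteq> E" using Lolli(3) E by blast
    have "supp E (L + (K + N)) b" by (rule Lolli(2)[OF BE cond])
    then show "supp E (L + K + N) b" by (simp add: ac_simps)
  qed
next
  case (Tensor a b)
  show ?case
  proof (simp only: supp.simps, intro allI impI)
    fix E N p assume E: "C \<subseteq> E" and h: "ante supp E N {#a, b#} (\<lambda>D M. deriv D M p)"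
    have cond: "Cond Gs E (K + N) (\<lambda>D M. deriv D M p)"
      unfolding Cond_def
    proof (intro ballI allI impI)
      fix G D M assume G: "G \<in> Gs" "E \<subseteq> D" "H D M G"
      then have sD: "supp D (K + M) (Tensor a b)" using Tensor(4) E unfolding Cond_def by blast
      have h': "ante supp D N {#a, b#} (\<lambda>D M. deriv D M p)" using h G(2) by (auto simp: ante_def)
      have "deriv D (K + M + N) p" using sD h' by (rule tensor_app)
      then show "deriv D (K + N + M) p" by (simp add: ac_simps)
    qed
    have BE: "B \<subseteq> E" using Tensor(3) E by blast
    have "deriv E (L + (K + N)) p" by (rule major[OF BE cond])
    then show "deriv E (L + K + N) p" by (simp add: ac_simps)
  qed
next
  case (With a b)
  then show ?case unfolding Cond_def by simp
next
  case (Plus a b)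
  show ?case
  proof (simp only: supp.simps, intro allI impI)
    fix E N p assume E: "C \<subseteq> E" and h: "ante supp E N {#a#} (\<lambda>D M. deriv D M p)"
      and h2: "ante supp E N {#b#} (\<lambda>D M. deriv D M p)"
    have cond: "Cond Gs E (K + N) (\<lambda>D M. deriv D M p)"
      unfolding Cond_def
    proof (intro ballI allI impI)
      fix G D M assume G: "G \<in> Gs" "E \<subseteq> D" "H D M G"
      then have sD: "supp D (K + M) (Plus a b)" using Plus(4) E unfolding Cond_def by blast
      have h': "ante supp D N {#a#} (\<lambda>D M. deriv D M p)" using h G(2) by (auto simp: ante_def)
      have h2': "ante supp D N {#b#} (\<lambda>D M. deriv D M p)" using h2 G(2) by (auto simp: ante_def)
      have "deriv D (K + M + N) p" using sD h' h2' by (rule plus_app)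
      then show "deriv D (K + N + M) p" by (simp add: ac_simps)
    qed
    have BE: "B \<subseteq> E" using Plus(3) E by blast
    have "deriv E (L + (K + N)) p" by (rule major[OF BE cond])
    then show "deriv E (L + K + N) p" by (simp add: ac_simps)
  qed
next
  case (Bang a)
  show ?case
  proof (simp only: supp.simps, intro allI impI)
    fix E N p assume E: "C \<subseteq> E" and h: "\<forall>D. E \<subseteq> D \<longrightarrow> supp D {#} a \<longrightarrow> deriv D N p"
    have cond: "Cond Gs E (K + N) (\<lambda>D M. deriv D M p)"
      unfolding Cond_def
    proof (intro ballI allI impI)
      fix G D M assume G: "G \<in> Gs" "E \<subseteq> D" "H D M G"
      then have sD: "supp D (K + M) (Bang a)" using Bang(3) E unfolding Cond_def by blast
      have h': "\<forall>D'. D \<subseteq> D' \<longrightarrow> supp D' {#} a \<longrightarrow> deriv D' N p" using h G(2) by blast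
      have "deriv D (K + M + N) p" using sD h' by (rule bang_app)
      then show "deriv D (K + N + M) p" by (simp add: ac_simps)
    qed
    have BE: "B \<subseteq> E" using Bang(2) E by blast
    have "deriv E (L + (K + N)) p" by (rule major[OF BE cond])
    then show "deriv E (L + K + N) p" by (simp add: ac_simps)
  qed
qed


definition SEM where
  "SEM C K \<Gamma> \<chi> \<longleftrightarrow> (\<forall>D M. C \<subseteq> D \<longrightarrow> H D M \<Gamma> \<longrightarrow> supp D (K + M) \<chi>)"

lemma H_single_bang: "H D M {#Bang d#} \<longleftrightarrow> supp D {#} d \<and> M = {#}"
  by simp

lemma cond_bang: "Cond {{#Bang d#}} C K Q \<longleftrightarrow> (\<forall>D. C \<subseteq> D \<longrightarrow> supp D {#} d \<longrightarrow> Q D K)"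
  unfolding Cond_def by auto

lemma cut:
  assumes s: "SEM C K (add_mset a \<Gamma>) \<chi>" and sa: "supp C L a"
  shows "SEM C (K + L) \<Gamma> \<chi>"
  unfolding SEM_def
proof (intro allI impI)
  fix D M assume D: "C \<subseteq> D" and h: "H D M \<Gamma>"
  have saD: "supp D L a" using sa D supp_mono by blast
  show "supp D (K + L + M) \<chi>"
  proof (cases "is_bang a")
    case False
    then have "H D (L + M) (add_mset a \<Gamma>)" using H_add_nb saD h by blast
    then have "supp D (K + (L + M)) \<chi>" using s D unfolding SEM_def by blast
    then show ?thesis by (simp add: ac_simps)
  next
    case True
    then obtain d where a: "a = Bang d" unfolding is_bang_def by blast
    have major: "deriv C' (L + K') p" if C': "D \<subseteq> C'" and c: "Cond {{#Bang d#}} C' K' (\<lambda>D M. deriv D M p)" for C' K' p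
    proof -
      have "supp C' L (Bang d)" using saD a C' supp_mono by blast
      moreover have "\<forall>D'. C' \<subseteq> D' \<longrightarrow> supp D' {#} d \<longrightarrow> deriv D' K' p" using c cond_bang by metis
      ultimately show ?thesis by (rule bang_app)
    qed
    have cond: "Cond {{#Bang d#}} D (K + M) (\<lambda>D M. supp D M \<chi>)"
      unfolding cond_bang
    proof (intro allI impI)
      fix D' assume D': "D \<subseteq> D'" and sd: "supp D' {#} d"
      have "H D' M (add_mset a \<Gamma>)" using a sd h D' H_mono by auto
      then show "supp D' (K + M) \<chi>" using s D D' unfolding SEM_def by blast
    qed
    have "supp D (L + (K + M)) \<chi>" by (rule elim[OF major order_refl cond])
    then show ?thesis by (simp add: ac_simps)
  qed
qed

lemma multicut:
  "SEM C K (\<Gamma> + mset xs) \<chi> \<Longrightarrow> list_all2 (supp C) Ks xs \<Longrightarrow> SEM C (K + sum_list Ks) \<Gamma> \<chi>"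
proof (induction xs arbitrary: K Ks)
  case Nil then show ?case by simp
next
  case (Cons x xs)
  then obtain k ks where Ks: "Ks = k # ks" "supp C k x" "list_all2 (supp C) ks xs"
    by (auto simp: list_all2_Cons2)
  have "SEM C K (add_mset x (\<Gamma> + mset xs)) \<chi>" using Cons(2) by simp
  then have "SEM C (K + k) (\<Gamma> + mset xs) \<chi>" using cut Ks(2) by blast
  then have "SEM C (K + k + sum_list ks) \<Gamma> \<chi>" using Cons.IH Ks(3) by blast
  then show ?case using Ks(1) by (simp add: ac_simps)
qed

lemma SEM_empty: "SEM C K {#} \<chi> \<Longrightarrow> supp C K \<chi>"
  unfolding SEM_def by (metis H_empty add_0_right order_refl)

lemma ante_SEM: "ante supp C K (add_mset a G) (\<lambda>D M. supp D M \<chi>) = SEM C K (add_mset a G) \<chi>"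
  by (simp add: ante_def SEM_def)

lemma ante_SEM_atom: "ante supp C K (add_mset a G) (\<lambda>D M. deriv D M p) = SEM C K (add_mset a G) (Atom p)"
  by (simp add: ante_def SEM_def)

lemma Cond_single: "G \<noteq> {#} \<Longrightarrow> Cond {G} C K Q = ante supp C K G Q"
  by (simp add: Cond_def ante_def)

lemma maj_tensor: "supp B L (Tensor a b) \<Longrightarrow> B \<subseteq> C \<Longrightarrow> Cond {{#a, b#}} C K (\<lambda>D M. deriv D M p) \<Longrightarrow> deriv C (L + K) p"
  by (metis Cond_single add_mset_not_empty supp_mono tensor_app)

lemma maj_plus: "supp B L (Plus a b) \<Longrightarrow> B \<subseteq> C \<Longrightarrow> Cond {{#a#}, {#b#}} C K (\<lambda>D M. deriv D M p) \<Longrightarrow> deriv C (L + K) p"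
proof -
  assume s: "supp B L (Plus a b)" and C: "B \<subseteq> C" and c: "Cond {{#a#}, {#b#}} C K (\<lambda>D M. deriv D M p)"
  have "Cond {{#a#}} C K (\<lambda>D M. deriv D M p)" "Cond {{#b#}} C K (\<lambda>D M. deriv D M p)"
    using c unfolding Cond_def by auto
  then show ?thesis using plus_app supp_mono[OF s C] by (simp add: Cond_single)
qed

lemma maj_bang: "supp B L (Bang a) \<Longrightarrow> B \<subseteq> C \<Longrightarrow> Cond {{#Bang a#}} C K (\<lambda>D M. deriv D M p) \<Longrightarrow> deriv C (L + K) p"
proof -
  assume s: "supp B L (Bang a)" and C: "B \<subseteq> C" and c: "Cond {{#Bang a#}} C K (\<lambda>D M. deriv D M p)"
  have "\<forall>D'. C \<subseteq> D' \<longrightarrow> supp D' {#} a \<longrightarrow> deriv D' K p" using c unfolding cond_bang .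
  then show ?thesis by (rule bang_app[OF supp_mono[OF s C]])
qed

lemma elim_bang:
  assumes s: "supp C L (Bang d)" and c: "\<forall>D. C \<subseteq> D \<longrightarrow> supp D {#} d \<longrightarrow> supp D K \<chi>"
  shows "supp C (L + K) \<chi>"
proof -
  have major: "\<And>C' K' p. C \<subseteq> C' \<Longrightarrow> Cond {{#Bang d#}} C' K' (\<lambda>D M. deriv D M p) \<Longrightarrow> deriv C' (L + K') p"
    using maj_bang[OF s] by blast
  have cond: "Cond {{#Bang d#}} C K (\<lambda>D M. supp D M \<chi>)" using c by (simp only: cond_bang)
  show ?thesis by (rule elim[OF major order_refl cond])
qed

lemma maj_one: "supp B L One \<Longrightarrow> B \<subseteq> C \<Longrightarrow> Cond {{#}} C K (\<lambda>D M. deriv D M p) \<Longrightarrow> deriv C (L + K) p"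
proof -
  assume s: "supp B L One" and C: "B \<subseteq> C" and c: "Cond {{#}} C K (\<lambda>D M. deriv D M p)"
  have "deriv C K p" using c unfolding Cond_def by (metis H_empty add_0_right order_refl singletonI)
  then show ?thesis using s C by simp
qed

lemma maj_zero: "supp B L Zero \<Longrightarrow> B \<subseteq> C \<Longrightarrow> Cond {} C K (\<lambda>D M. deriv D M p) \<Longrightarrow> deriv C (L + K) p"
  by simp (metis deriv_mono)

definition sem where "sem \<Gamma> \<phi> \<longleftrightarrow> (\<forall>C K. H C K \<Gamma> \<longrightarrow> supp C K \<phi>)"

lemma sem_SEM: "sem \<Gamma> \<phi> \<Longrightarrow> SEM C {#} \<Gamma> \<phi>"
  unfolding sem_def SEM_def by simp

lemma sem_valid: "sem \<Gamma> \<phi> \<Longrightarrow> valid \<Gamma> \<phi>"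
  unfolding valid_def ante_supp_def ante_def sem_def by auto

lemma H_sum: "H C K (sum_list (map fst ps)) \<Longrightarrow> \<exists>Ks. list_all2 (\<lambda>K pr. H C K (fst pr)) Ks ps \<and> K = sum_list Ks"
proof (induction ps arbitrary: K)
  case Nil then show ?case by simp
next
  case (Cons a ps)
  have "H C K (fst a + sum_list (map fst ps))" using Cons.prems by simp
  then obtain K1 K2 where K: "K = K1 + K2" "H C K1 (fst a)" "H C K2 (sum_list (map fst ps))"
    using H_plus[THEN iffD1] by blast
  obtain Ks where Ks: "list_all2 (\<lambda>K pr. H C K (fst pr)) Ks ps" "K2 = sum_list Ks"
    using Cons.IH[OF K(3)] by blast
  show ?case using K Ks by (intro exI[of _ "K1 # Ks"]) simp
qed

lemma nd_sem: "nd \<Gamma> \<phi> \<Longrightarrow> sem \<Gamma> \<phi>"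
proof (induction rule: nd.induct)
  case (Ax \<phi>)
  show ?case unfolding sem_def
  proof (intro allI impI)
    fix C K assume h: "H C K {#\<phi>#}"
    show "supp C K \<phi>"
    proof (cases "is_bang \<phi>")
      case True
      then obtain d where d: "\<phi> = Bang d" unfolding is_bang_def by blast
      then have "supp C {#} d" "K = {#}" using h by auto
      then show ?thesis using d by (auto intro: supp_mono)
    next
      case False
      then show ?thesis using h H_add_nb by fastforce
    qed
  qed
next
  case (LolliI \<Gamma> \<phi> \<psi>)
  show ?case unfolding sem_def
  proof (intro allI impI)
    fix C K assume h: "H C K \<Gamma>"
    show "supp C K (Lolli \<phi> \<psi>)"
    proof (simp add: ante_def, intro allI impI)
      fix D M assume D: "C \<subseteq> D" and hm: "H D M {#\<phi>#}"
      have "H D (K + M) (\<Gamma> + {#\<phi>#})" using H_plusI[OF H_mono[OF h D] hm] .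
      then show "supp D (K + M) \<psi>" using LolliI.IH unfolding sem_def by blast
    qed
  qed
next
  case (LolliE \<Gamma> \<phi> \<psi> \<Delta>)
  show ?case unfolding sem_def
  proof (intro allI impI)
    fix C K assume h: "H C K (\<Gamma> + \<Delta>)"
    obtain K1 K2 where K: "K = K1 + K2" "H C K1 \<Gamma>" "H C K2 \<Delta>" using H_plus[THEN iffD1, OF h] by blast
    have "SEM C K1 {#\<phi>#} \<psi>" using LolliE.IH(1) K(2) unfolding sem_def by (simp add: ante_SEM[symmetric])
    moreover have "supp C K2 \<phi>" using LolliE.IH(2) K(3) unfolding sem_def by blast
    ultimately have "SEM C (K1 + K2) {#} \<psi>" using cut by blast
    then show "supp C K \<psi>" using K SEM_empty by blast
  qed
next
  case (TensorI \<Gamma> \<phi> \<Delta> \<psi>)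
  show ?case unfolding sem_def
  proof (intro allI impI)
    fix C K assume h: "H C K (\<Gamma> + \<Delta>)"
    obtain K1 K2 where K: "K = K1 + K2" "H C K1 \<Gamma>" "H C K2 \<Delta>" using H_plus[THEN iffD1, OF h] by blast
    have s1: "supp C K1 \<phi>" using TensorI.IH(1) K(2) unfolding sem_def by blast
    have s2: "supp C K2 \<psi>" using TensorI.IH(2) K(3) unfolding sem_def by blast
    show "supp C K (Tensor \<phi> \<psi>)"
    proof (simp only: supp.simps ante_SEM_atom, intro allI impI)
      fix E N p assume E: "C \<subseteq> E" and s: "SEM E N {#\<phi>, \<psi>#} (Atom p)"
      have "SEM E (N + K1) {#\<psi>#} (Atom p)" using cut[OF s supp_mono[OF s1 E]] by (simp add: ac_simps)
      then have "SEM E (N + K1 + K2) {#} (Atom p)" using cut supp_mono[OF s2 E] by blast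
      then have "supp E (N + K1 + K2) (Atom p)" by (rule SEM_empty)
      then show "deriv E (K + N) p" using K by (simp add: ac_simps)
    qed
  qed
next
  case (TensorE \<Gamma> \<phi> \<psi> \<Delta> \<chi>)
  show ?case unfolding sem_def
  proof (intro allI impI)
    fix C K assume h: "H C K (\<Gamma> + \<Delta>)"
    obtain K1 K2 where K: "K = K1 + K2" "H C K1 \<Gamma>" "H C K2 \<Delta>" using H_plus[THEN iffD1, OF h] by blast
    have s1: "supp C K1 (Tensor \<phi> \<psi>)" using TensorE.IH(1) K(2) unfolding sem_def by blast
    have cond: "Cond {{#\<phi>, \<psi>#}} C K2 (\<lambda>D M. supp D M \<chi>)"
      unfolding Cond_def
    proof (intro ballI allI impI)
      fix G D M assume "G \<in> {{#\<phi>, \<psi>#}}" "C \<subseteq> D" "H D M G"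
      then have "H D (K2 + M) (\<Delta> + {#\<phi>, \<psi>#})" using H_plusI H_mono K(3) by blast
      then show "supp D (K2 + M) \<chi>" using TensorE.IH(2) unfolding sem_def by blast
    qed
    show "supp C K \<chi>" using elim[OF maj_tensor[OF s1] order_refl cond] K by simp
  qed
next
  case OneI
  then show ?case unfolding sem_def by simp
next
  case (OneE \<Gamma> \<Delta> \<phi>)
  show ?case unfolding sem_def
  proof (intro allI impI)
    fix C K assume h: "H C K (\<Gamma> + \<Delta>)"
    obtain K1 K2 where K: "K = K1 + K2" "H C K1 \<Gamma>" "H C K2 \<Delta>" using H_plus[THEN iffD1, OF h] by blast
    have s1: "supp C K1 One" using OneE.IH(1) K(2) unfolding sem_def by blast
    have s2: "supp C K2 \<phi>" using OneE.IH(2) K(3) unfolding sem_def by blast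
    have cond: "Cond {{#}} C K2 (\<lambda>D M. supp D M \<phi>)"
      unfolding Cond_def using s2 supp_mono by auto
    show "supp C K \<phi>" using elim[OF maj_one[OF s1] order_refl cond] K by simp
  qed
next
  case (WithI \<Gamma> \<phi> \<psi>)
  then show ?case unfolding sem_def by simp
next
  case (WithE1 \<Gamma> \<phi> \<psi>)
  then show ?case unfolding sem_def by simp
next
  case (WithE2 \<Gamma> \<phi> \<psi>)
  then show ?case unfolding sem_def by simp
next
  case (PlusI1 \<Gamma> \<phi> \<psi>)
  show ?case unfolding sem_def
  proof (intro allI impI)
    fix C K assume h: "H C K \<Gamma>"
    have s1: "supp C K \<phi>" using PlusI1.IH h unfolding sem_def by blast
    show "supp C K (Plus \<phi> \<psi>)"
    proof (simp only: supp.simps ante_SEM_atom, intro allI impI)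
      fix E N p assume E: "C \<subseteq> E" and s: "SEM E N {#\<phi>#} (Atom p)"
      have "SEM E (N + K) {#} (Atom p)" using cut[OF s supp_mono[OF s1 E]] by (simp add: ac_simps)
      then have "supp E (N + K) (Atom p)" by (rule SEM_empty)
      then show "deriv E (K + N) p" by (simp add: ac_simps)
    qed
  qed
next
  case (PlusI2 \<Gamma> \<psi> \<phi>)
  show ?case unfolding sem_def
  proof (intro allI impI)
    fix C K assume h: "H C K \<Gamma>"
    have s1: "supp C K \<psi>" using PlusI2.IH h unfolding sem_def by blast
    show "supp C K (Plus \<phi> \<psi>)"
    proof (simp only: supp.simps ante_SEM_atom, intro allI impI)
      fix E N p assume E: "C \<subseteq> E" and s: "SEM E N {#\<psi>#} (Atom p)"
      have "SEM E (N + K) {#} (Atom p)" using cut[OF s supp_mono[OF s1 E]] by (simp add: ac_simps)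
      then have "supp E (N + K) (Atom p)" by (rule SEM_empty)
      then show "deriv E (K + N) p" by (simp add: ac_simps)
    qed
  qed
next
  case (PlusE \<Gamma> \<phi> \<psi> \<Delta> \<chi>)
  show ?case unfolding sem_def
  proof (intro allI impI)
    fix C K assume h: "H C K (\<Gamma> + \<Delta>)"
    obtain K1 K2 where K: "K = K1 + K2" "H C K1 \<Gamma>" "H C K2 \<Delta>" using H_plus[THEN iffD1, OF h] by blast
    have s1: "supp C K1 (Plus \<phi> \<psi>)" using PlusE.IH(1) K(2) unfolding sem_def by blast
    have cond: "Cond {{#\<phi>#}, {#\<psi>#}} C K2 (\<lambda>D M. supp D M \<chi>)"
      unfolding Cond_def
    proof (intro ballI allI impI)
      fix G D M assume G: "G \<in> {{#\<phi>#}, {#\<psi>#}}" and D: "C \<subseteq> D" and hm: "H D M G"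
      have hD: "H D K2 \<Delta>" using H_mono K(3) D by blast
      show "supp D (K2 + M) \<chi>"
      proof (cases "G = {#\<phi>#}")
        case True
        then have "H D (K2 + M) (\<Delta> + {#\<phi>#})" using H_plusI[OF hD hm] by simp
        then show ?thesis using PlusE.IH(2) unfolding sem_def by blast
      next
        case False
        then have "G = {#\<psi>#}" using G by blast
        then have "H D (K2 + M) (\<Delta> + {#\<psi>#})" using H_plusI[OF hD hm] by simp
        then show ?thesis using PlusE.IH(3) unfolding sem_def by blast
      qed
    qed
    show "supp C K \<chi>" using elim[OF maj_plus[OF s1] order_refl cond] K by simp
  qed
next
  case (TopI ps)
  then show ?case unfolding sem_def by simp
next
  case (ZeroE ps \<Delta> \<chi>)
  show ?case unfolding sem_def
  proof (intro allI impI)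
    fix C K assume h: "H C K (sum_list (map fst ps) + \<Delta>)"
    obtain K1 K2 where K: "K = K1 + K2" "H C K2 \<Delta>" using H_plus[THEN iffD1, OF h] by blast
    have s1: "supp C K2 Zero" using ZeroE.IH K(2) unfolding sem_def by blast
    have cond: "Cond {} C K1 (\<lambda>D M. supp D M \<chi>)" unfolding Cond_def by simp
    show "supp C K \<chi>" using elim[OF maj_zero[OF s1] order_refl cond] K by (simp add: ac_simps)
  qed
next
  case (Prom ps \<phi>)
  show ?case unfolding sem_def
  proof (intro allI impI)
    fix C K assume h: "H C K (sum_list (map fst ps))"
    then obtain Ks where Ks: "list_all2 (\<lambda>K pr. H C K (fst pr)) Ks ps" "K = sum_list Ks"
      using H_sum by blast
    have la: "list_all2 (supp C) Ks (map (\<lambda>x. Bang (snd x)) ps)"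
      unfolding list_all2_conv_all_nth
    proof (intro conjI allI impI)
      show "length Ks = length (map (\<lambda>x. Bang (snd x)) ps)" using Ks(1) list_all2_lengthD by simp
      fix i assume i: "i < length Ks"
      then have i': "i < length ps" using Ks(1) list_all2_lengthD by metis
      have "H C (Ks ! i) (fst (ps ! i))" using Ks(1) i' list_all2_nthD2 by blast
      moreover have "sem (fst (ps ! i)) (Bang (snd (ps ! i)))" using Prom.IH(1)[OF i'] by blast
      ultimately show "supp C (Ks ! i) (map (\<lambda>x. Bang (snd x)) ps ! i)" using i' unfolding sem_def by simp
    qed
    show "supp C K (Bang \<phi>)"
    proof (simp only: supp.simps, intro allI impI)
      fix E N p assume E: "C \<subseteq> E" and d: "\<forall>D. E \<subseteq> D \<longrightarrow> supp D {#} \<phi> \<longrightarrow> deriv D N p"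
      have s: "SEM E N ({#} + mset (map (\<lambda>x. Bang (snd x)) ps)) (Atom p)"
        unfolding SEM_def
      proof (intro allI impI)
        fix D M assume D: "E \<subseteq> D" and hm: "H D M ({#} + mset (map (\<lambda>x. Bang (snd x)) ps))"
        have "\<forall>x\<in>#{#} + mset (map (\<lambda>x. Bang (snd x)) ps). is_bang x" by (auto simp: is_bang_def)
        then have M: "M = {#}" using H_allbang hm by blast
        have "supp D M \<phi>" using Prom.IH(2) hm unfolding sem_def by simp
        then show "supp D (N + M) (Atom p)" using M d D by simp
      qed
      have la': "list_all2 (supp E) Ks (map (\<lambda>x. Bang (snd x)) ps)"
        by (rule list_all2_mono[OF la]) (rule supp_mono[OF _ E])
      have "SEM E (N + sum_list Ks) {#} (Atom p)" using multicut[OF s la'] .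
      then have "supp E (N + sum_list Ks) (Atom p)" by (rule SEM_empty)
      then show "deriv E (K + N) p" using Ks(2) by (simp add: ac_simps)
    qed
  qed
next
  case (Der \<Gamma> \<phi> \<Delta> \<psi>)
  show ?case unfolding sem_def
  proof (intro allI impI)
    fix C K assume h: "H C K (\<Gamma> + \<Delta>)"
    obtain K1 K2 where K: "K = K1 + K2" "H C K1 \<Gamma>" "H C K2 \<Delta>" using H_plus[THEN iffD1, OF h] by blast
    have s1: "supp C K1 (Bang \<phi>)" using Der.IH(1) K(2) unfolding sem_def by blast
    have cond: "Cond {{#Bang \<phi>#}} C K2 (\<lambda>D M. supp D M \<psi>)"
      unfolding cond_bang
    proof (intro allI impI)
      fix D assume D: "C \<subseteq> D" and sd: "supp D {#} \<phi>"
      have "SEM D {#} (add_mset \<phi> \<Delta>) \<psi>" using sem_SEM Der.IH(2) by simp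
      then have "SEM D ({#} + {#}) \<Delta> \<psi>" by (rule cut[OF _ sd])
      then have sD: "SEM D {#} \<Delta> \<psi>" by simp
      have hD: "H D K2 \<Delta>" by (rule H_mono[OF K(3) D])
      have "supp D ({#} + K2) \<psi>" using sD hD unfolding SEM_def by (meson order_refl)
      then show "supp D K2 \<psi>" by simp
    qed
    have "supp C (K1 + K2) \<psi>"
      using elim_bang[OF s1] cond by (simp only: cond_bang)
    then show "supp C K \<psi>" using K by simp
  qed
next
  case (Wk \<Gamma> \<phi> \<Delta> \<psi>)
  show ?case unfolding sem_def
  proof (intro allI impI)
    fix C K assume h: "H C K (\<Gamma> + \<Delta>)"
    obtain K1 K2 where K: "K = K1 + K2" "H C K1 \<Gamma>" "H C K2 \<Delta>" using H_plus[THEN iffD1, OF h] by blast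
    have s1: "supp C K1 (Bang \<phi>)" using Wk.IH(1) K(2) unfolding sem_def by blast
    have s2: "supp C K2 \<psi>" using Wk.IH(2) K(3) unfolding sem_def by blast
    have cond: "Cond {{#Bang \<phi>#}} C K2 (\<lambda>D M. supp D M \<psi>)"
      unfolding cond_bang
    proof (intro allI impI)
      fix D assume D: "C \<subseteq> D"
      show "supp D K2 \<psi>" by (rule supp_mono[OF s2 D])
    qed
    have "supp C (K1 + K2) \<psi>"
      using elim_bang[OF s1] cond by (simp only: cond_bang)
    then show "supp C K \<psi>" using K by simp
  qed
next
  case (Ctr \<Gamma> \<phi> \<Delta> \<psi>)
  show ?case unfolding sem_def
  proof (intro allI impI)
    fix C K assume h: "H C K (\<Gamma> + \<Delta>)"
    obtain K1 K2 where K: "K = K1 + K2" "H C K1 \<Gamma>" "H C K2 \<Delta>" using H_plus[THEN iffD1, OF h] by blast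
    have s1: "supp C K1 (Bang \<phi>)" using Ctr.IH(1) K(2) unfolding sem_def by blast
    have cond: "Cond {{#Bang \<phi>#}} C K2 (\<lambda>D M. supp D M \<psi>)"
      unfolding cond_bang
    proof (intro allI impI)
      fix D assume D: "C \<subseteq> D" and sd: "supp D {#} \<phi>"
      have "H D {#} {#Bang \<phi>, Bang \<phi>#}" using sd by simp
      then have "H D (K2 + {#}) (\<Delta> + {#Bang \<phi>, Bang \<phi>#})" by (rule H_plusI[OF H_mono[OF K(3) D]])
      then have "supp D (K2 + {#}) \<psi>" using Ctr.IH(2) unfolding sem_def by blast
      then show "supp D K2 \<psi>" by simp
    qed
    have "supp C (K1 + K2) \<psi>"
      using elim_bang[OF s1] cond by (simp only: cond_bang)
    then show "supp C K \<psi>" using K by simp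
  qed
qed

theorem theorem6:
  fixes \<Gamma> :: "'a form multiset" and \<phi> :: "'a form"
  assumes "nd \<Gamma> \<phi>"
  shows "valid \<Gamma> \<phi>"
  using assms nd_sem sem_valid by blast

end
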